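(* Let $\delta\in[0,1]$, let $(U,\mathcal{P})$ be an instance of MESC with $\mathcal{P}=\{P_1,\dots,P_k\}$, let $BG$ be any cover output by BiasedGreedy($\delta$), with Light set $L$ and Heavy set $H=U\setminus L$, and let $OPT$ be any cover. For $v\in U$ write $a_v=|P_{BG(v)}|$, and for $i\in[k]$ let $x_i=|OPT^{-1}(i)|$ and $y_i=|OPT^{-1}(i)\cap H|$. Then: (1) for every $i\in[k]$ and every $v\in OPT^{-1}(i)\cap L$, $a_v\ge x_i$; (2) for every $i\in[k]$, $\prod_{v\in OPT^{-1}(i)\cap H} a_v\ \ge\ y_i!$. Consequently, \[ -\frac1n\sum_{v\in U}\log_2 a_v\ \le\ Ent(OPT)-\log_2 n-\frac1n\sum_{i=1}^{k}y_i\log_2\frac{y_i}{x_i}+\frac{n-\lceil\delta n\rceil}{n}\log_2 e . \]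
   Context: Minimum Entropy Set Cover (MESC): an instance is a finite ground set $U$ with $|U|=n\ge1$ and a family $\mathcal{P}=\{P_1,\dots,P_k\}$ of subsets of $U$ with $\bigcup_i P_i=U$. A cover is a function $g:U\to[k]$ with $u\in P_{g(u)}$ for all $u\in U$. Its entropy is $Ent(g)=-\sum_{i=1}^{k}\frac{|g^{-1}(i)|}{n}\log_2\frac{|g^{-1}(i)|}{n}$ (with $0\log_2 0=0$; terms with $y_i=0$ in $\sum y_i\log_2(y_i/x_i)$ are taken as $0$). The frequency of an element $u$ is the number of indices $i$ with $u\in P_i$. Algorithm BiasedGreedy($\delta$), $\delta\in[0,1]$: let $L\subseteq U$ be a set of $\lceil\delta n\rceil$ elements of smallest frequency (ties broken arbitrarily) ("Light" elements) and $H=U\setminus L$ ("Heavy" elements). Phase 1: for every $e\in L$, set $g(e)=i_e$ where $i_e$ maximizes $|P_{i}|$ over all $i$ with $e\in P_i$. Phase 2: initialize $Q_i=P_i\setminus L$ for all $i\in[k]$; while $H\neq\emptyset$: pick any $e\in H$, set $g(e)=i_e$ where $i_e$ maximizes the current $|Q_i|$ over all $i$ with $e\in Q_i$, then delete $e$ from every $Q_i$ and from $H$. The output is the cover $g$. *)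

theory Defs
  imports Complex_Main
begin

definition mesc_instance :: "'a set \<Rightarrow> nat \<Rightarrow> (nat \<Rightarrow> 'a set) \<Rightarrow> bool" where
  "mesc_instance U k P \<longleftrightarrow> finite U \<and> U \<noteq> {} \<and> (\<forall>i\<in>{1..k}. P i \<subseteq> U)
      \<and> (\<Union>i\<in>{1..k}. P i) = U"

definition is_cover :: "'a set \<Rightarrow> nat \<Rightarrow> (nat \<Rightarrow> 'a set) \<Rightarrow> ('a \<Rightarrow> nat) \<Rightarrow> bool" where
  "is_cover U k P g \<longleftrightarrow> (\<forall>u\<in>U. g u \<in> {1..k} \<and> u \<in> P (g u))"

definition entropy :: "'a set \<Rightarrow> nat \<Rightarrow> ('a \<Rightarrow> nat) \<Rightarrow> real" where
  "entropy U k g = - (\<Sum>i\<in>{1..k}.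
      (let p = real (card {u\<in>U. g u = i}) / real (card U) in if p = 0 then 0 else p * log 2 p))"

definition freq :: "nat \<Rightarrow> (nat \<Rightarrow> 'a set) \<Rightarrow> 'a \<Rightarrow> nat" where
  "freq k P u = card {i\<in>{1..k}. u \<in> P i}"

definition light_set :: "real \<Rightarrow> 'a set \<Rightarrow> nat \<Rightarrow> (nat \<Rightarrow> 'a set) \<Rightarrow> 'a set \<Rightarrow> bool" where
  "light_set \<delta> U k P L \<longleftrightarrow> L \<subseteq> U \<and> card L = nat \<lceil>\<delta> * real (card U)\<rceil>
      \<and> (\<forall>l\<in>L. \<forall>h\<in>U - L. freq k P l \<le> freq k P h)"

text \<open>g is a possible output of BiasedGreedy(delta) in a run with Light set L.\<close>
definition biased_greedy_output ::
  "real \<Rightarrow> 'a set \<Rightarrow> nat \<Rightarrow> (nat \<Rightarrow> 'a set) \<Rightarrow> ('a \<Rightarrow> nat) \<Rightarrow> 'a set \<Rightarrow> bool" where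
  "biased_greedy_output \<delta> U k P g L \<longleftrightarrow>
     light_set \<delta> U k P L
   \<and> (\<forall>e\<in>L. g e \<in> {1..k} \<and> e \<in> P (g e)
          \<and> (\<forall>i\<in>{1..k}. e \<in> P i \<longrightarrow> card (P i) \<le> card (P (g e))))
   \<and> (\<exists>xs. distinct xs \<and> set xs = U - L \<and>
          (\<forall>j<length xs.
             (let e = xs ! j; Q = (\<lambda>i. P i - L - set (take j xs)) in
               g e \<in> {1..k} \<and> e \<in> Q (g e)
               \<and> (\<forall>i\<in>{1..k}. e \<in> Q i \<longrightarrow> card (Q i) \<le> card (Q (g e))))))"

end

theory Submission
  imports Defs
begin


lemma pow_fact_le_exp: "(x::real) \<ge> 0 \<Longrightarrow> x ^ n / fact n \<le> exp x"
proof -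
  assume x: "x \<ge> 0"
  have "(\<Sum>i\<in>{n}. x ^ i / fact i) \<le> (\<Sum>i. x ^ i / fact i)"
    using x summable_exp_generic[of x]
    by (intro sum_le_suminf) (auto simp: divide_inverse ac_simps)
  thus ?thesis by (simp add: exp_def divide_inverse ac_simps)
qed

lemma stirling_low: "real m * ln (real m) - real m \<le> ln (fact m)"
proof (cases "m = 0")
  case True thus ?thesis by simp
next
  case False
  hence pos: "real m > 0" by simp
  have "real m ^ m / fact m \<le> exp (real m)" by (rule pow_fact_le_exp) simp
  hence "real m ^ m \<le> exp (real m) * fact m" by (simp add: divide_le_eq mult.commute)
  hence "ln (real m ^ m) \<le> ln (exp (real m) * fact m)"
    using pos by (subst ln_le_cancel_iff) auto
  thus ?thesis using pos by (simp add: ln_mult ln_realpow)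
qed

lemma prod_rank:
  fixes S :: "'a set" and f pos :: "'a \<Rightarrow> nat"
  assumes fin: "finite S" and inj: "inj_on pos S"
    and le: "\<And>e. e \<in> S \<Longrightarrow> card {e'\<in>S. pos e \<le> pos e'} \<le> f e"
  shows "fact (card S) \<le> (\<Prod>e\<in>S. f e)"
proof -
  define r where "r e = card {e'\<in>S. pos e \<le> pos e'}" for e
  have rinj: "inj_on r S"
  proof (rule inj_onI)
    fix e1 e2 assume e: "e1 \<in> S" "e2 \<in> S" "r e1 = r e2"
    show "e1 = e2"
    proof (rule ccontr)
      assume ne: "e1 \<noteq> e2"
      hence pne: "pos e1 \<noteq> pos e2" using inj e by (auto dest: inj_onD)
      have gen: "r a < r b" if ab: "a \<in> S" "b \<in> S" "pos b < pos a" for a b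
      proof -
        have "b \<in> {e'\<in>S. pos b \<le> pos e'}" "b \<notin> {e'\<in>S. pos a \<le> pos e'}" using ab by auto
        moreover have "{e'\<in>S. pos a \<le> pos e'} \<subseteq> {e'\<in>S. pos b \<le> pos e'}" using ab by auto
        ultimately have "{e'\<in>S. pos a \<le> pos e'} \<subset> {e'\<in>S. pos b \<le> pos e'}" by blast
        thus ?thesis unfolding r_def using fin by (intro psubset_card_mono) auto
      qed
      show False
      proof (cases "pos e1 < pos e2")
        case True thus False using gen[of e2 e1] e by auto
      next
        case False thus False using gen[of e1 e2] e pne by auto
      qed
    qed
  qed
  have rS: "r ` S \<subseteq> {1..card S}"
  proof
    fix z assume "z \<in> r ` S"
    then obtain e where e: "e \<in> S" "z = r e" by auto
    have "e \<in> {e'\<in>S. pos e \<le> pos e'}" using e by auto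
    hence "1 \<le> r e" unfolding r_def using fin by (metis (no_types, lifting) card_0_eq empty_iff finite_subset less_one mem_Collect_eq not_le subsetI)
    moreover have "r e \<le> card S" unfolding r_def using fin by (intro card_mono) auto
    ultimately show "z \<in> {1..card S}" using e by auto
  qed
  have "card (r ` S) = card S" using card_image[OF rinj] .
  hence req: "r ` S = {1..card S}" using rS by (intro card_subset_eq) auto
  have "fact (card S) = (\<Prod>{1..card S})" by (simp add: fact_prod)
  also have "\<dots> = (\<Prod>e\<in>S. r e)" using prod.reindex[OF rinj, of id] req by simp
  also have "\<dots> \<le> (\<Prod>e\<in>S. f e)" using le unfolding r_def by (intro prod_mono) auto
  finally show ?thesis .
qed

theorem mainTheorem4:
  fixes U :: "'a set" and k :: nat and P :: "nat \<Rightarrow> 'a set"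
    and \<delta> :: real and BG OPT :: "'a \<Rightarrow> nat" and L :: "'a set"
  assumes inst: "mesc_instance U k P"
    and delta: "0 \<le> \<delta>" "\<delta> \<le> 1"
    and bg: "biased_greedy_output \<delta> U k P BG L"
    and opt: "is_cover U k P OPT"
  defines "n \<equiv> card U"
    and "a \<equiv> (\<lambda>v. card (P (BG v)))"
    and "x \<equiv> (\<lambda>i. card {v\<in>U. OPT v = i})"
    and "y \<equiv> (\<lambda>i. card ({v\<in>U. OPT v = i} \<inter> (U - L)))"
  shows "(\<forall>i\<in>{1..k}. \<forall>v\<in>{v\<in>U. OPT v = i} \<inter> L. a v \<ge> x i)
       \<and> (\<forall>i\<in>{1..k}. (\<Prod>v\<in>{v\<in>U. OPT v = i} \<inter> (U - L). a v) \<ge> fact (y i))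
       \<and> - (1 / real n) * (\<Sum>v\<in>U. log 2 (real (a v)))
           \<le> entropy U k OPT - log 2 (real n)
              - (1 / real n) * (\<Sum>i\<in>{1..k}. if y i = 0 then 0
                                   else real (y i) * log 2 (real (y i) / real (x i)))
              + (real n - real_of_int \<lceil>\<delta> * real n\<rceil>) / real n * log 2 (exp 1)"
proof -
  from inst have finU: "finite U" and Une: "U \<noteq> {}"
    and PU: "\<And>i. i \<in> {1..k} \<Longrightarrow> P i \<subseteq> U"
    unfolding mesc_instance_def by auto
  have Pfin: "\<And>i. i \<in> {1..k} \<Longrightarrow> finite (P i)" using PU finU finite_subset by blast
  have npos: "n > 0" unfolding n_def using finU Une by (simp add: card_gt_0_iff)
  from bg have ls: "light_set \<delta> U k P L"
    and ph1: "\<forall>e\<in>L. BG e \<in> {1..k} \<and> e \<in> P (BG e)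
          \<and> (\<forall>i\<in>{1..k}. e \<in> P i \<longrightarrow> card (P i) \<le> card (P (BG e)))"
    and ph2: "\<exists>xs. distinct xs \<and> set xs = U - L \<and>
          (\<forall>j<length xs.
             (let e = xs ! j; Q = (\<lambda>i. P i - L - set (take j xs)) in
               BG e \<in> {1..k} \<and> e \<in> Q (BG e)
               \<and> (\<forall>i\<in>{1..k}. e \<in> Q i \<longrightarrow> card (Q i) \<le> card (Q (BG e)))))"
    unfolding biased_greedy_output_def by auto
  from ls have LU: "L \<subseteq> U" and cardL: "card L = nat \<lceil>\<delta> * real (card U)\<rceil>"
    unfolding light_set_def by auto
  from ph2 obtain xs where dxs: "distinct xs" and sxs: "set xs = U - L"
    and stepxs: "\<And>j. j < length xs \<Longrightarrow>
               BG (xs ! j) \<in> {1..k} \<and> xs ! j \<in> P (BG (xs ! j)) - L - set (take j xs)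
               \<and> (\<forall>i\<in>{1..k}. xs ! j \<in> P i - L - set (take j xs) \<longrightarrow>
                  card (P i - L - set (take j xs)) \<le> card (P (BG (xs ! j)) - L - set (take j xs)))"
    by (auto simp: Let_def)
  from opt have OPTk: "\<And>u. u \<in> U \<Longrightarrow> OPT u \<in> {1..k}"
    and OPTP: "\<And>u. u \<in> U \<Longrightarrow> u \<in> P (OPT u)"
    unfolding is_cover_def by auto
  define pos where "pos e = (SOME j. j < length xs \<and> xs ! j = e)" for e
  have posH: "pos e < length xs \<and> xs ! pos e = e" if "e \<in> U - L" for e
  proof -
    from that sxs obtain j where "j < length xs" "xs ! j = e" by (metis in_set_conv_nth)
    hence "\<exists>j. j < length xs \<and> xs ! j = e" by blast
    thus ?thesis unfolding pos_def by (rule someI_ex)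
  qed
  have BGU: "BG v \<in> {1..k} \<and> v \<in> P (BG v)" if "v \<in> U" for v
  proof (cases "v \<in> L")
    case True thus ?thesis using ph1 by auto
  next
    case False
    hence "v \<in> U - L" using that by auto
    from posH[OF this] stepxs[of "pos v"] show ?thesis by auto
  qed
  have apos: "a v \<ge> 1" if "v \<in> U" for v
  proof -
    have "finite (P (BG v))" using Pfin BGU that by auto
    moreover have "P (BG v) \<noteq> {}" using BGU that by auto
    ultimately show ?thesis unfolding a_def by (simp add: Suc_le_eq card_gt_0_iff)
  qed
  define C where "C i = {v\<in>U. OPT v = i}" for i
  have CP: "C i \<subseteq> P i" for i unfolding C_def using OPTP by auto
  have Cfin: "finite (C i)" for i unfolding C_def using finU by auto
  have part1: "\<forall>i\<in>{1..k}. \<forall>v\<in>{v\<in>U. OPT v = i} \<inter> L. a v \<ge> x i"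
  proof (intro ballI)
    fix i v assume i: "i \<in> {1..k}" and v: "v \<in> {v\<in>U. OPT v = i} \<inter> L"
    have "x i \<le> card (P i)" unfolding x_def using CP[of i] Pfin[OF i] unfolding C_def
      by (intro card_mono) auto
    also have "\<dots> \<le> a v" unfolding a_def using ph1 v i OPTP by auto
    finally show "a v \<ge> x i" .
  qed
  have part2: "\<forall>i\<in>{1..k}. (\<Prod>v\<in>{v\<in>U. OPT v = i} \<inter> (U - L). a v) \<ge> fact (y i)"
  proof (intro ballI)
    fix i assume i: "i \<in> {1..k}"
    define S where "S = {v\<in>U. OPT v = i} \<inter> (U - L)"
    have Sfin: "finite S" unfolding S_def using finU by auto
    have injp: "inj_on pos S"
      by (rule inj_onI) (metis posH S_def IntD2)
    have "fact (card S) \<le> (\<Prod>e\<in>S. a e)"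
    proof (rule prod_rank[OF Sfin injp])
      fix e assume eS: "e \<in> S"
      hence eH: "e \<in> U - L" and eU: "e \<in> U" and oe: "OPT e = i" unfolding S_def by auto
      define j where "j = pos e"
      have j: "j < length xs" "xs ! j = e" using posH[OF eH] j_def by auto
      define Q where "Q i' = P i' - L - set (take j xs)" for i'
      have st: "BG e \<in> {1..k} \<and> e \<in> Q (BG e)
               \<and> (\<forall>i'\<in>{1..k}. e \<in> Q i' \<longrightarrow> card (Q i') \<le> card (Q (BG e)))"
        using stepxs[OF j(1)] j(2) unfolding Q_def by simp
      have notin: "xs ! m \<notin> set (take j xs)" if "j \<le> m" "m < length xs" for m
      proof
        assume "xs ! m \<in> set (take j xs)"
        then obtain m' where m': "m' < length (take j xs)" "take j xs ! m' = xs ! m"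
          by (metis in_set_conv_nth)
        hence "xs ! m' = xs ! m" "m' < j" "m' < length xs" by auto
        thus False using dxs that nth_eq_iff_index_eq by fastforce
      qed
      have sub: "{e'\<in>S. pos e \<le> pos e'} \<subseteq> Q i"
      proof
        fix e' assume "e' \<in> {e'\<in>S. pos e \<le> pos e'}"
        hence e'S: "e' \<in> S" and le: "j \<le> pos e'" unfolding j_def by auto
        hence e'H: "e' \<in> U - L" and "OPT e' = i" unfolding S_def by auto
        hence "e' \<in> P i" using OPTP by auto
        moreover have "e' \<notin> set (take j xs)" using notin[OF le] posH[OF e'H] by auto
        ultimately show "e' \<in> Q i" unfolding Q_def using e'H by auto
      qed
      have eQ: "e \<in> Q i" unfolding Q_def using OPTP[OF eU] oe eH notin[of j] j by auto
      have "card {e'\<in>S. pos e \<le> pos e'} \<le> card (Q i)"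
        using sub Pfin[OF i] unfolding Q_def by (intro card_mono) auto
      also have "\<dots> \<le> card (Q (BG e))" using st eQ i by auto
      also have "\<dots> \<le> a e" unfolding a_def Q_def using Pfin st by (intro card_mono) auto
      finally show "card {e'\<in>S. pos e \<le> pos e'} \<le> a e" .
    qed
    thus "(\<Prod>v\<in>{v\<in>U. OPT v = i} \<inter> (U - L). a v) \<ge> fact (y i)"
      unfolding y_def S_def by simp
  qed
  define lg where "lg v = log 2 (real (a v))" for v
  define c where "c = log 2 (exp 1)"
  define T where "T i = (if y i = 0 then 0 else real (y i) * log 2 (real (y i) / real (x i)))" for i
  define X where "X i = real (x i) * log 2 (real (x i))" for i
  have xC: "x i = card (C i)" for i unfolding x_def C_def by simp
  have yC: "y i = card (C i \<inter> (U - L))" for i unfolding y_def C_def by simp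
  have img: "OPT ` U \<subseteq> {1..k}" using OPTk by auto
  have imgH: "OPT ` (U - L) \<subseteq> {1..k}" using OPTk by auto
  have sumU: "(\<Sum>v\<in>U. lg v) = (\<Sum>i\<in>{1..k}. \<Sum>v\<in>C i. lg v)"
    unfolding C_def using sum.group[OF finU finite_atLeastAtMost img, of lg] by auto
  have per: "(\<Sum>v\<in>C i. lg v) \<ge> X i + T i - real (y i) * c" if i: "i \<in> {1..k}" for i
  proof -
    have split: "(\<Sum>v\<in>C i. lg v) = (\<Sum>v\<in>C i \<inter> L. lg v) + (\<Sum>v\<in>C i \<inter> (U - L). lg v)"
    proof -
      have "C i - L = C i \<inter> (U - L)" unfolding C_def by auto
      thus ?thesis using sum.Int_Diff[OF Cfin[of i], of lg L] by simp
    qed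
    have cards: "real (card (C i \<inter> L)) = real (x i) - real (y i)"
    proof -
      have "card (C i) = card (C i \<inter> L) + card (C i - L)"
        using card_Int_Diff[OF Cfin[of i]] by blast
      moreover have "C i - L = C i \<inter> (U - L)" unfolding C_def by auto
      ultimately show ?thesis unfolding xC yC by simp
    qed
    have L1: "(\<Sum>v\<in>C i \<inter> L. lg v) \<ge> real (card (C i \<inter> L)) * log 2 (real (x i))"
    proof (rule sum_bounded_below)
      fix v assume v: "v \<in> C i \<inter> L"
      have "x i \<ge> 1" unfolding xC using v Cfin[of i]
        by (metis IntD1 One_nat_def Suc_leI card_gt_0_iff empty_iff)
      moreover have "a v \<ge> x i" using part1 i v unfolding C_def by auto
      ultimately show "log 2 (real (x i)) \<le> lg v" unfolding lg_def by simp
    qed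
    have Hfin: "finite (C i \<inter> (U - L))" using Cfin by auto
    have L2: "(\<Sum>v\<in>C i \<inter> (U - L). lg v) \<ge> real (y i) * log 2 (real (y i)) - real (y i) * c"
    proof -
      have "(\<Sum>v\<in>C i \<inter> (U - L). lg v) = log 2 (\<Prod>v\<in>C i \<inter> (U - L). real (a v))"
        unfolding lg_def log_def using Hfin apos unfolding C_def
        by (subst ln_prod) (auto simp: sum_divide_distrib Suc_le_eq)
      also have "\<dots> \<ge> log 2 (fact (y i))"
      proof -
        have "fact (y i) \<le> (\<Prod>v\<in>C i \<inter> (U - L). a v)" using part2 i unfolding C_def y_def by auto
        hence "(fact (y i) :: real) \<le> (\<Prod>v\<in>C i \<inter> (U - L). real (a v))"
          by (metis of_nat_fact of_nat_le_iff of_nat_prod)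
        moreover have "(0::real) < fact (y i)" by simp
        ultimately have "0 < (\<Prod>v\<in>C i \<inter> (U - L). real (a v))" "(fact (y i)::real) \<le> (\<Prod>v\<in>C i \<inter> (U - L). real (a v))" "(0::real) < fact (y i)" by linarith+
        thus ?thesis using log_le_cancel_iff[of 2 "fact (y i)" "\<Prod>v\<in>C i \<inter> (U - L). real (a v)"] by linarith
      qed
      moreover have "log 2 (fact (y i)) \<ge> real (y i) * log 2 (real (y i)) - real (y i) * c"
        using stirling_low[of "y i"] unfolding c_def log_def by (simp add: divide_right_mono diff_divide_distrib[symmetric])
      ultimately show ?thesis by linarith
    qed
    have "X i + T i - real (y i) * c
        = (real (x i) - real (y i)) * log 2 (real (x i)) + (real (y i) * log 2 (real (y i)) - real (y i) * c)"
    proof (cases "y i = 0")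
      case True thus ?thesis unfolding X_def T_def by simp
    next
      case False
      have "y i \<le> x i" unfolding xC yC using Cfin by (intro card_mono) auto
      hence "x i > 0" using False by simp
      thus ?thesis unfolding X_def T_def using False
        by (simp add: log_divide algebra_simps)
    qed
    thus ?thesis using split cards L1 L2 by simp
  qed
  have sumx: "(\<Sum>i\<in>{1..k}. real (x i)) = real n"
  proof -
    have "(\<Sum>i\<in>{1..k}. x i) = n"
      unfolding x_def n_def using sum.group[OF finU finite_atLeastAtMost img, of "\<lambda>_. 1::nat"] by auto
    thus ?thesis by (metis of_nat_sum)
  qed
  have sumy: "(\<Sum>i\<in>{1..k}. real (y i)) = real n - real_of_int \<lceil>\<delta> * real n\<rceil>"
  proof -
    have fH: "finite (U - L)" using finU by auto
    have "(\<Sum>i\<in>{1..k}. y i) = card (U - L)"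
    proof -
      have "(\<Sum>i\<in>{1..k}. card {v\<in>U - L. OPT v = i}) = card (U - L)"
        using sum.group[OF fH finite_atLeastAtMost imgH, of "\<lambda>_. 1::nat"] by auto
      moreover have "{v\<in>U - L. OPT v = i} = {v\<in>U. OPT v = i} \<inter> (U - L)" for i by auto
      ultimately show ?thesis unfolding y_def by simp
    qed
    also have "card (U - L) = n - card L" unfolding n_def using LU finU by (simp add: card_Diff_subset finite_subset)
    finally have "(\<Sum>i\<in>{1..k}. y i) = n - card L" .
    moreover have "card L \<le> n" unfolding n_def using LU finU card_mono by blast
    moreover have "real (card L) = real_of_int \<lceil>\<delta> * real n\<rceil>"
      using cardL delta unfolding n_def by simp
    ultimately show ?thesis by (metis of_nat_diff of_nat_sum)
  qed
  have ent: "entropy U k OPT = log 2 (real n) - (1 / real n) * (\<Sum>i\<in>{1..k}. X i)"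
  proof -
    have tm: "(let p = real (card {u\<in>U. OPT u = i}) / real (card U) in if p = 0 then 0 else p * log 2 p)
       = real (x i) / real n * (log 2 (real (x i)) - log 2 (real n))" for i
    proof (cases "x i = 0")
      case True thus ?thesis unfolding x_def n_def by simp
    next
      case False thus ?thesis using npos unfolding x_def n_def by (simp add: Let_def log_divide)
    qed
    have "entropy U k OPT = - (\<Sum>i\<in>{1..k}. real (x i) / real n * (log 2 (real (x i)) - log 2 (real n)))"
      unfolding entropy_def using tm by simp
    also have "\<dots> = - ((1 / real n) * (\<Sum>i\<in>{1..k}. X i) - (\<Sum>i\<in>{1..k}. real (x i)) / real n * log 2 (real n))"
      unfolding X_def by (simp add: sum_subtractf sum_divide_distrib sum_distrib_left sum_distrib_right algebra_simps)
    also have "\<dots> = log 2 (real n) - (1 / real n) * (\<Sum>i\<in>{1..k}. X i)"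
      using sumx npos by simp
    finally show ?thesis .
  qed
  have "(\<Sum>i\<in>{1..k}. X i + T i - real (y i) * c) \<le> (\<Sum>v\<in>U. lg v)"
    unfolding sumU by (intro sum_mono per)
  hence main: "(\<Sum>i\<in>{1..k}. X i) + (\<Sum>i\<in>{1..k}. T i) - (\<Sum>i\<in>{1..k}. real (y i)) * c \<le> (\<Sum>v\<in>U. lg v)"
    by (simp add: sum.distrib sum_subtractf sum_distrib_right)
  have part3: "- (1 / real n) * (\<Sum>v\<in>U. lg v)
      \<le> entropy U k OPT - log 2 (real n) - (1 / real n) * (\<Sum>i\<in>{1..k}. T i)
         + (real n - real_of_int \<lceil>\<delta> * real n\<rceil>) / real n * c"
  proof -
    have "- (1 / real n) * (\<Sum>v\<in>U. lg v) \<le> - (1 / real n) *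
         ((\<Sum>i\<in>{1..k}. X i) + (\<Sum>i\<in>{1..k}. T i) - (\<Sum>i\<in>{1..k}. real (y i)) * c)"
      using main npos by (simp add: divide_le_cancel)
    thus ?thesis unfolding ent sumy using npos by (simp add: algebra_simps add_divide_distrib diff_divide_distrib)
  qed
  show ?thesis using part1 part2 part3 unfolding lg_def T_def c_def by simp
qed

end
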